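(* Under the setting, assumptions (A1)–(A2) and the algorithm PDAc-L described in the context, fix any $(x^\star,y^\star)\in\Omega$, let $J(x,y)=\mathcal L(x,y^\star)-\mathcal L(x^\star,y)$ and for $n\ge1$ define $$a_n=\frac{\psi}{\psi-1}\|z_{n+1}-x^\star\|^2+\frac1\beta\|y_{n-1}-y^\star\|^2+\omega\delta_{n-1}\|x_n-x_{n-1}\|^2,$$ $$b_n=-\frac{\tau_n\tau_{n-1}}{\xi}\|\theta_n\|^2+\frac1\beta\|y_n-y_{n-1}\|^2+\omega\delta_{n-1}\|x_n-x_{n-1}\|^2-2\tau_n\Phi_n^y.$$ Then for all $n\ge1$, $a_{n+1}+2\tau_nJ(x_n,y_n)\le a_n-b_n$.
   Context: Let $f:\mathbb{R}^p\to(-\infty,+\infty]$ and $g:\mathbb{R}^q\to(-\infty,+\infty]$ be proper closed convex functions; $f^*(y)=\sup_u\{\langle y,u\rangle-f(u)\}$ is the Fenchel conjugate, $\mathrm{dom}(h)=\{x:h(x)<+\infty\}$, and for $\lambda>0$, $\mathrm{Prox}_{\lambda h}(x)=\arg\min_u\{h(u)+\frac{1}{2\lambda}\|u-x\|^2\}$. Let $\Phi:\mathrm{dom}(g)\times\mathrm{dom}(f^* )\to\mathbb{R}$ be continuous and $\mathcal L(x,y)=g(x)+\Phi(x,y)-f^*(y)$. Let $\Omega$ be the set of $(x^\star,y^\star)\in\mathrm{dom}(g)\times\mathrm{dom}(f^* )$ with $-\nabla_x\Phi(x^\star,y^\star)\in\partial g(x^\star)$ and $\nabla_y\Phi(x^\star,y^\star)\in\partial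 f^*(y^\star)$. Assume: (A1) $\Omega\neq\emptyset$, $\mathrm{dom}(g)\times\mathrm{dom}(f^* )\subseteq\mathrm{dom}(\Phi)$, and $\mathcal L(x^\star,y^\star)$ is finite; (A2) for each $y\in\mathrm{dom}(f^* )$, $\Phi(\cdot,y)$ is convex and differentiable, for each $x\in\mathrm{dom}(g)$, $\Phi(x,\cdot)$ is concave and differentiable, and for all bounded $\mathcal X\subset\mathbb R^q$, $\mathcal Y\subset\mathbb R^p$ there exist $L_{yy},L_{xx}\ge 0$, $L_{xy}>0$ with $\|\nabla_y\Phi(x,y)-\nabla_y\Phi(x,\tilde y)\|\le L_{yy}\|y-\tilde y\|$ and $\|\nabla_x\Phi(x,y)-\nabla_x\Phi(\tilde x,\tilde y)\|\le L_{xx}\|x-\tilde x\|+L_{xy}\|y-\tilde y\|$ for all $x,\tilde x\in\mathcal X\cap\mathrm{dom}(g)$, $y,\tilde y\in\mathcal Y\cap\mathrm{dom}(f^* )$. Algorithm PDAc-L: choose $\psi\in(1,1+\sqrt3)$, $\xi>0$, $\varphi>1$ with $\omega:=2\psi-\xi-\frac{\psi^3\varphi}{1+\psi}>0$, $\tau_{\max}>0$, $\nu\in(0,1)$, $\mu\in(0,1)$, $\eta\in[0,1)$, an integer $M\ge1$, $\beta>0$, $x_0\in\mathrm{dom}(g)$, $y_0\in\mathrm{dom}(f^* )$, $\tau_0\in(0,\tau_{\max}]$; set $z_0=x_0$, $\delta_0=1$. For $n=1,2,\dots$: (1) $z_n=\frac{\psi-1}{\psi}x_{n-1}+\frac1\psi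 z_{n-1}$ and $x_n=\mathrm{Prox}_{\tau_{n-1}g}(z_n-\tau_{n-1}\nabla_x\Phi(x_{n-1},y_{n-1}))$. (2) Let $\tau=\min\{\varphi\tau_{n-1},\tau_{\max}\}$; set $\tau_n=\tau\mu^i$ and $y_n=\mathrm{Prox}_{\beta\tau_n f^*}(y_{n-1}+\beta\tau_n\nabla_y\Phi(x_n,y_{n-1}))$, where $i$ is the smallest nonnegative integer such that $\frac{\tau_n\tau_{n-1}}{\xi}\|\theta_n\|^2+2\tau_n\Phi_n^y\le\nu r_n+(1-\nu)c_n$, with $\theta_n=\nabla_x\Phi(x_n,y_n)-\nabla_x\Phi(x_{n-1},y_{n-1})$, $\Phi_n^y=\Phi(x_n,y_{n-1})+\langle\nabla_y\Phi(x_n,y_{n-1}),y_n-y_{n-1}\rangle-\Phi(x_n,y_n)$, $r_n=\omega\delta_{n-1}\|x_n-x_{n-1}\|^2+\frac1\beta\|y_n-y_{n-1}\|^2$, $c_n=\frac{\eta}{|\mathcal I_n|}\sum_{i\in\mathcal I_n}r_i$, $\mathcal I_n=\{n-1,n-2,\dots,\max\{n-M,1\}\}$ (the $r_i$ for $i<n$ being the values from earlier iterations; for $n=1$, $\mathcal I_1=\emptyset$ and $c_1:=0$). (3) $\delta_n=\tau_n/\tau_{n-1}$. *)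

theory Defs
  imports "HOL-Analysis.Analysis"
begin

definition epigraph :: "('a \<Rightarrow> ereal) \<Rightarrow> ('a \<times> real) set" where
  "epigraph h = {(x, t). h x \<le> ereal t}"

definition proper_fun :: "('a \<Rightarrow> ereal) \<Rightarrow> bool" where
  "proper_fun h \<longleftrightarrow> (\<forall>x. h x \<noteq> -\<infinity>) \<and> (\<exists>x. h x < \<infinity>)"

definition closed_fun :: "('a::topological_space \<Rightarrow> ereal) \<Rightarrow> bool" where
  "closed_fun h \<longleftrightarrow> closed (epigraph h)"

definition convex_fun :: "('a::real_vector \<Rightarrow> ereal) \<Rightarrow> bool" where
  "convex_fun h \<longleftrightarrow> convex (epigraph h)"

definition edom :: "('a \<Rightarrow> ereal) \<Rightarrow> 'a set" where
  "edom h = {x. h x < \<infinity>}"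

definition fconj :: "('a::real_inner \<Rightarrow> ereal) \<Rightarrow> 'a \<Rightarrow> ereal" where
  "fconj f y = (SUP u. ereal (y \<bullet> u) - f u)"

definition subdiff :: "('a::real_inner \<Rightarrow> ereal) \<Rightarrow> 'a \<Rightarrow> 'a set" where
  "subdiff h x = {v. h x < \<infinity> \<and> (\<forall>u. h x + ereal (v \<bullet> (u - x)) \<le> h u)}"

text \<open>The set of minimizers of u |-> h u + ||u - x||^2/(2 lam); for proper closed convex h
  and lam > 0 this is the singleton {Prox_{lam h}(x)}.\<close>
definition Prox_set :: "('a::real_normed_vector \<Rightarrow> ereal) \<Rightarrow> real \<Rightarrow> 'a \<Rightarrow> 'a set" where
  "Prox_set h lam x = {u. \<forall>v. h u + ereal (norm (u - x)^2 / (2 * lam))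
                              \<le> h v + ereal (norm (v - x)^2 / (2 * lam))}"

text \<open>Quantities of the algorithm PDAc-L (x, y, delta are the iterate sequences,
  Gx, Gy the partial gradients of Phi).\<close>

definition theta_n :: "('a \<Rightarrow> 'b \<Rightarrow> 'a::real_vector) \<Rightarrow> (nat \<Rightarrow> 'a) \<Rightarrow> (nat \<Rightarrow> 'b) \<Rightarrow> nat \<Rightarrow> 'b \<Rightarrow> 'a" where
  "theta_n Gx x y n v = Gx (x n) v - Gx (x (n - 1)) (y (n - 1))"

definition PhiY_n :: "('a \<Rightarrow> 'b \<Rightarrow> real) \<Rightarrow> ('a \<Rightarrow> 'b \<Rightarrow> 'b::real_inner) \<Rightarrow> (nat \<Rightarrow> 'a) \<Rightarrow> (nat \<Rightarrow> 'b) \<Rightarrow> nat \<Rightarrow> 'b \<Rightarrow> real" where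
  "PhiY_n Phi Gy x y n v = Phi (x n) (y (n - 1)) + Gy (x n) (y (n - 1)) \<bullet> (v - y (n - 1)) - Phi (x n) v"

definition r_n :: "real \<Rightarrow> real \<Rightarrow> (nat \<Rightarrow> real) \<Rightarrow> (nat \<Rightarrow> 'a::real_normed_vector) \<Rightarrow> (nat \<Rightarrow> 'b::real_normed_vector) \<Rightarrow> nat \<Rightarrow> 'b \<Rightarrow> real" where
  "r_n \<omega> \<beta> \<delta> x y n v = \<omega> * \<delta> (n - 1) * (norm (x n - x (n - 1)))^2 + (1 / \<beta>) * (norm (v - y (n - 1)))^2"

definition c_n :: "real \<Rightarrow> nat \<Rightarrow> real \<Rightarrow> real \<Rightarrow> (nat \<Rightarrow> real) \<Rightarrow> (nat \<Rightarrow> 'a::real_normed_vector) \<Rightarrow> (nat \<Rightarrow> 'b::real_normed_vector) \<Rightarrow> nat \<Rightarrow> real" where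
  "c_n \<eta> M \<omega> \<beta> \<delta> x y n =
     (let I = {max (n - M) 1 .. n - 1} in
      if I = {} then 0 else \<eta> / real (card I) * (\<Sum>i\<in>I. r_n \<omega> \<beta> \<delta> x y i (y i)))"

end

theory Submission
  imports Defs
begin


lemma eps_le:
  fixes A C N :: real
  assumes "N \<ge> 0" "\<And>t. 0 < t \<Longrightarrow> t \<le> 1 \<Longrightarrow> A \<le> C + t * N"
  shows "A \<le> C"
proof (rule ccontr)
  assume "\<not> A \<le> C"
  define D where "D = A - C"
  have D: "D > 0" using \<open>\<not> A \<le> C\<close> D_def by simp
  define t where "t = min 1 (D / (2 * (N + 1)))"
  have t: "0 < t" "t \<le> 1" using D assms(1) by (auto simp: t_def)
  have "t * N \<le> D / (2 * (N + 1)) * N" using assms(1) by (intro mult_right_mono) (auto simp: t_def)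
  also have "\<dots> < D"
  proof -
    have "0 < D * N + D * 2" using D assms(1) by (simp add: add_nonneg_pos)
    thus ?thesis using D assms(1) by (simp add: field_simps)
  qed
  finally show False using assms(2)[OF t] D_def by simp
qed

lemma prox_vi:
  fixes h :: "'a::real_inner \<Rightarrow> ereal"
  assumes P: "p \<in> Prox_set h lam w" and lam: "lam > 0"
    and ninf: "\<And>x. h x \<noteq> -\<infinity>" and ex: "h v0 < \<infinity>"
    and cvx: "\<And>a b t. h a < \<infinity> \<Longrightarrow> h b < \<infinity> \<Longrightarrow> 0 \<le> t \<Longrightarrow> t \<le> 1 \<Longrightarrow>
       h ((1 - t) *\<^sub>R a + t *\<^sub>R b) \<le> ereal ((1 - t) * real_of_ereal (h a) + t * real_of_ereal (h b))"
  shows "h p < \<infinity>"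
    and "h x < \<infinity> \<Longrightarrow> real_of_ereal (h p) - real_of_ereal (h x) \<le> ((p - w) \<bullet> (x - p)) / lam"
proof -
  have "h p + ereal (norm (p - w)^2 / (2 * lam)) \<le> h v0 + ereal (norm (v0 - w)^2 / (2 * lam))"
    using P by (auto simp: Prox_set_def)
  also have "\<dots> < \<infinity>" using ex by simp
  finally show hp: "h p < \<infinity>" by auto
  assume hx: "h x < \<infinity>"
  define H where "H = real_of_ereal (h p)"
  define X where "X = real_of_ereal (h x)"
  have eH: "h p = ereal H" using hp ninf[of p] by (cases "h p") (auto simp: H_def)
  have eX: "h x = ereal X" using hx ninf[of x] by (cases "h x") (auto simp: X_def)
  define N where "N = (norm (x - p))^2"
  define I where "I = (p - w) \<bullet> (x - p)"
  show "real_of_ereal (h p) - real_of_ereal (h x) \<le> ((p - w) \<bullet> (x - p)) / lam"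
    unfolding H_def[symmetric] X_def[symmetric] I_def[symmetric]
  proof (rule eps_le[of "N / (2 * lam)"])
    show "0 \<le> N / (2 * lam)" using lam by (simp add: N_def)
    fix t :: real assume t: "0 < t" "t \<le> 1"
    define u where "u = (1 - t) *\<^sub>R p + t *\<^sub>R x"
    have "h p + ereal (norm (p - w)^2 / (2 * lam)) \<le> h u + ereal (norm (u - w)^2 / (2 * lam))"
      using P by (auto simp: Prox_set_def)
    also have "\<dots> \<le> ereal ((1 - t) * H + t * X) + ereal (norm (u - w)^2 / (2 * lam))"
      using cvx[OF hp hx, of t] t unfolding u_def H_def X_def by (intro add_right_mono) auto
    finally have ineq: "H + norm (p - w)^2 / (2 * lam) \<le> (1 - t) * H + t * X + norm (u - w)^2 / (2 * lam)"
      using eH by simp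
    have uw: "u - w = (p - w) + t *\<^sub>R (x - p)" by (simp add: u_def algebra_simps)
    have "norm (u - w)^2 = norm (p - w)^2 + 2 * t * I + t^2 * N"
      unfolding uw power2_norm_eq_inner N_def I_def
      by (simp add: inner_add_left inner_add_right power2_eq_square algebra_simps inner_commute)
    with ineq have "t * (H - X) \<le> (2 * t * I + t^2 * N) / (2 * lam)"
      by (simp add: add_divide_distrib algebra_simps)
    hence "t * (H - X) * (2 * lam) \<le> (2 * t * I + t^2 * N)"
      using lam by (simp add: pos_le_divide_eq)
    hence "t * ((H - X) * (2 * lam)) \<le> t * (2 * I + t * N)" by (simp add: algebra_simps power2_eq_square)
    hence "(H - X) * (2 * lam) \<le> 2 * I + t * N" using t by simp
    thus "H - X \<le> I / lam + t * (N / (2 * lam))" using lam by (simp add: field_simps)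
  qed
qed

lemma epi_cvx:
  fixes h :: "'a::real_vector \<Rightarrow> ereal"
  assumes cv: "convex_fun h" and ninf: "\<And>x. h x \<noteq> -\<infinity>" and ha: "h a < \<infinity>" and hb: "h b < \<infinity>"
    and t: "0 \<le> t" "t \<le> 1"
  shows "h ((1 - t) *\<^sub>R a + t *\<^sub>R b) \<le> ereal ((1 - t) * real_of_ereal (h a) + t * real_of_ereal (h b))"
proof -
  have ea: "h a = ereal (real_of_ereal (h a))" using ha ninf[of a] by (cases "h a") auto
  have eb: "h b = ereal (real_of_ereal (h b))" using hb ninf[of b] by (cases "h b") auto
  have A: "(a, real_of_ereal (h a)) \<in> epigraph h" using ea by (simp add: epigraph_def)
  have B: "(b, real_of_ereal (h b)) \<in> epigraph h" using eb by (simp add: epigraph_def)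
  have "(1 - t) *\<^sub>R (a, real_of_ereal (h a)) + t *\<^sub>R (b, real_of_ereal (h b)) \<in> epigraph h"
    using cv A B t unfolding convex_fun_def by (intro convexD) auto
  thus ?thesis by (simp add: epigraph_def)
qed

lemma fconj_ninf:
  assumes "proper_fun f"
  shows "fconj f y \<noteq> -\<infinity>"
proof -
  obtain u where u: "f u < \<infinity>" using assms by (auto simp: proper_fun_def)
  obtain r where r: "f u = ereal r" using u assms by (cases "f u") (auto simp: proper_fun_def)
  have "ereal (y \<bullet> u) - f u \<le> fconj f y" unfolding fconj_def by (rule SUP_upper) auto
  thus ?thesis using r by auto
qed

lemma fconj_cvx:
  fixes f :: "'a::real_inner \<Rightarrow> ereal"
  assumes pf: "proper_fun f" and ha: "fconj f a < \<infinity>" and hb: "fconj f b < \<infinity>"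
    and t: "0 \<le> t" "t \<le> 1"
  shows "fconj f ((1 - t) *\<^sub>R a + t *\<^sub>R b) \<le> ereal ((1 - t) * real_of_ereal (fconj f a) + t * real_of_ereal (fconj f b))"
proof -
  define A where "A = real_of_ereal (fconj f a)"
  define B where "B = real_of_ereal (fconj f b)"
  have ea: "fconj f a = ereal A" using ha fconj_ninf[OF pf, of a] by (cases "fconj f a") (auto simp: A_def)
  have eb: "fconj f b = ereal B" using hb fconj_ninf[OF pf, of b] by (cases "fconj f b") (auto simp: B_def)
  show ?thesis unfolding fconj_def[of f "(1 - t) *\<^sub>R a + t *\<^sub>R b"] A_def[symmetric] B_def[symmetric]
  proof (rule SUP_least)
    fix u
    show "ereal (((1 - t) *\<^sub>R a + t *\<^sub>R b) \<bullet> u) - f u \<le> ereal ((1 - t) * A + t * B)"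
    proof (cases "f u")
      case (real r)
      have "ereal (a \<bullet> u) - f u \<le> fconj f a" unfolding fconj_def by (rule SUP_upper) auto
      hence 1: "a \<bullet> u - r \<le> A" using ea real by simp
      have "ereal (b \<bullet> u) - f u \<le> fconj f b" unfolding fconj_def by (rule SUP_upper) auto
      hence 2: "b \<bullet> u - r \<le> B" using eb real by simp
      have "((1 - t) *\<^sub>R a + t *\<^sub>R b) \<bullet> u - r = (1 - t) * (a \<bullet> u - r) + t * (b \<bullet> u - r)"
        by (simp add: inner_add_left algebra_simps)
      also have "\<dots> \<le> (1 - t) * A + t * B"
        using 1 2 t by (intro add_mono mult_left_mono) auto
      finally show ?thesis using real by simp
    next
      case PInf thus ?thesis by simp
    next
      case MInf thus ?thesis using pf by (auto simp: proper_fun_def)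
    qed
  qed
qed

lemma grad_ineq:
  fixes \<phi> :: "'a::real_inner \<Rightarrow> real"
  assumes cv: "convex_on S \<phi>" and u: "u \<in> S" and x: "x \<in> S"
    and D: "(\<phi> has_derivative (\<lambda>h. G \<bullet> h)) (at u)"
  shows "\<phi> u + G \<bullet> (x - u) \<le> \<phi> x"
proof -
  define d where "d = x - u"
  have l: "((\<lambda>s::real. u + s *\<^sub>R d) has_derivative (\<lambda>h. h *\<^sub>R d)) (at 0)"
    by (auto intro!: derivative_eq_intros)
  have D': "(\<phi> has_derivative (\<lambda>h. G \<bullet> h)) (at (u + 0 *\<^sub>R d))" using D by simp
  have e: "(\<lambda>h. G \<bullet> (h *\<^sub>R d)) = (*) (G \<bullet> d)" by (auto simp: fun_eq_iff)
  have "((\<lambda>s. \<phi> (u + s *\<^sub>R d)) has_derivative (\<lambda>h. G \<bullet> (h *\<^sub>R d))) (at 0)"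
    using has_derivative_compose[OF l D'] by simp
  hence "((\<lambda>s. \<phi> (u + s *\<^sub>R d)) has_field_derivative (G \<bullet> d)) (at 0)"
    unfolding has_field_derivative_def e .
  hence "((\<lambda>s. \<phi> (u + s *\<^sub>R d)) has_field_derivative (G \<bullet> d)) (at 0 within {0<..})"
    by (rule has_field_derivative_at_within)
  hence T: "((\<lambda>s. (\<phi> (u + s *\<^sub>R d) - \<phi> (u + 0 *\<^sub>R d)) / (s - 0)) \<longlongrightarrow> G \<bullet> d) (at_right 0)"
    unfolding has_field_derivative_iff by simp
  have ev: "eventually (\<lambda>s. (\<phi> (u + s *\<^sub>R d) - \<phi> (u + 0 *\<^sub>R d)) / (s - 0) \<le> \<phi> x - \<phi> u) (at_right (0::real))"
    using eventually_at_right_real[of 0 1, OF zero_less_one]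
  proof eventually_elim
    case (elim s)
    hence s: "0 < s" "s < 1" by auto
    have "u + s *\<^sub>R d = (1 - s) *\<^sub>R u + s *\<^sub>R x" by (simp add: d_def algebra_simps)
    hence "\<phi> (u + s *\<^sub>R d) \<le> (1 - s) * \<phi> u + s * \<phi> x"
      using convex_onD[OF cv, of s u x] s u x by simp
    hence "\<phi> (u + s *\<^sub>R d) - \<phi> u \<le> s * (\<phi> x - \<phi> u)" by (simp add: algebra_simps)
    thus ?case using s by (simp add: pos_divide_le_eq mult.commute)
  qed
  have "G \<bullet> d \<le> \<phi> x - \<phi> u"
    by (rule tendsto_upperbound[OF T ev]) simp
  thus ?thesis by (simp add: d_def)
qed



lemma final_alg:
  fixes p q Z Z2 w xo \<theta> :: "'a::real_inner" and yn yn1 ys :: "'b::real_inner"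
  assumes psi: "\<psi> > 1" and xi: "\<xi> > 0" and beta: "\<beta> > 0"
    and om: "\<omega> = 2 * \<psi> - \<xi> - \<psi>^3 * \<phi> / (1 + \<psi>)"
    and t: "t > 0" and t': "t' > 0" and d: "d = t / t'" and dphi: "d \<le> \<phi>"
    and Z2: "Z2 = ((\<psi> - 1) / \<psi>) *\<^sub>R p + (1 / \<psi>) *\<^sub>R Z"
    and KEY: "t * Jr \<le> (p - Z) \<bullet> (w - p) + d * \<psi> * ((q - Z) \<bullet> (p - q)) + t * (\<theta> \<bullet> (q - p))
               + (1 / \<beta>) * ((yn - yn1) \<bullet> (ys - yn)) + t * PY"
  shows "\<psi> / (\<psi> - 1) * (norm (Z2 - w))^2 + (1 / \<beta>) * (norm (yn - ys))^2 + \<omega> * d * (norm (p - q))^2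
         + 2 * t * Jr
      \<le> \<psi> / (\<psi> - 1) * (norm (Z - w))^2 + (1 / \<beta>) * (norm (yn1 - ys))^2 + \<omega> * dd * (norm (q - xo))^2
         - (- (t * t' / \<xi>) * (norm \<theta>)^2 + (1 / \<beta>) * (norm (yn - yn1))^2
            + \<omega> * dd * (norm (q - xo))^2 - 2 * t * PY)"
proof -
  define NA where "NA = (norm (p - Z))^2"
  define NB where "NB = (norm (q - Z))^2"
  define NC where "NC = (norm (p - q))^2"
  define NZ where "NZ = (norm (Z - w))^2"
  define NZ2 where "NZ2 = (norm (Z2 - w))^2"
  define NP where "NP = (norm (p - w))^2"
  define Y1 where "Y1 = (norm (yn1 - ys))^2"
  define Y2 where "Y2 = (norm (yn - yn1))^2"
  define Y3 where "Y3 = (norm (yn - ys))^2"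
  define Th where "Th = (norm \<theta>)^2"
  define IA where "IA = (p - Z) \<bullet> (w - p)"
  define IB where "IB = (q - Z) \<bullet> (p - q)"
  define IT where "IT = \<theta> \<bullet> (q - p)"
  define IY where "IY = (yn - yn1) \<bullet> (ys - yn)"
  have dpos: "d > 0" using t t' d by simp
  have psi0: "\<psi> > 0" using psi by simp
  have E1: "2 * IA = NZ - NA - NP"
  proof -
    have "Z - w = (p - w) - (p - Z)" "w - p = - (p - w)" by (simp_all add: algebra_simps)
    thus ?thesis unfolding IA_def NZ_def NA_def NP_def power2_norm_eq_inner
      by (simp add: inner_diff_left inner_diff_right inner_commute algebra_simps)
  qed
  have E2: "2 * IB = NA - NB - NC"
  proof -
    have "p - Z = (q - Z) + (p - q)" by simp
    thus ?thesis unfolding IB_def NA_def NB_def NC_def power2_norm_eq_inner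
      by (simp add: inner_add_left inner_add_right inner_commute algebra_simps)
  qed
  have E3: "2 * IY = Y1 - Y2 - Y3"
  proof -
    have "yn1 - ys = (yn - ys) - (yn - yn1)" "ys - yn = - (yn - ys)" by (simp_all add: algebra_simps)
    thus ?thesis unfolding IY_def Y1_def Y2_def Y3_def power2_norm_eq_inner
      by (simp add: inner_diff_left inner_diff_right inner_commute algebra_simps)
  qed
  have E4: "(\<psi> - 1) * \<psi> * NP = \<psi>^2 * NZ2 - \<psi> * NZ + (\<psi> - 1) * NA"
  proof -
    define a where "a = p - w"
    define b where "b = Z - w"
    have s: "\<psi> *\<^sub>R (Z2 - w) = (\<psi> - 1) *\<^sub>R a + b"
    proof -
      have h: "\<psi> *\<^sub>R Z2 = (\<psi> - 1) *\<^sub>R p + Z"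
        using psi0 unfolding Z2 by (simp add: scaleR_add_right)
      show ?thesis unfolding a_def b_def scaleR_diff_right h by (simp add: algebra_simps)
    qed
    have "\<psi>^2 * NZ2 = (norm (\<psi> *\<^sub>R (Z2 - w)))^2"
      unfolding NZ2_def by (simp add: power_mult_distrib)
    also have "\<dots> = (\<psi> - 1)^2 * (a \<bullet> a) + 2 * (\<psi> - 1) * (a \<bullet> b) + b \<bullet> b"
      unfolding s power2_norm_eq_inner
      by (simp add: inner_add_left inner_add_right inner_commute algebra_simps power2_eq_square)
    finally have 1: "\<psi>^2 * NZ2 = (\<psi> - 1)^2 * (a \<bullet> a) + 2 * (\<psi> - 1) * (a \<bullet> b) + b \<bullet> b" .
    have 2: "NA = a \<bullet> a - 2 * (a \<bullet> b) + b \<bullet> b"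
      unfolding NA_def power2_norm_eq_inner
      using arg_cong[of "p - Z" "a - b" "\<lambda>v. v \<bullet> v"] unfolding a_def b_def
      by (simp add: inner_diff_left inner_diff_right inner_commute algebra_simps)
    have 3: "NP = a \<bullet> a" "NZ = b \<bullet> b" unfolding NP_def NZ_def a_def b_def power2_norm_eq_inner by simp_all
    show ?thesis unfolding 1 2 3 by (simp add: algebra_simps power2_eq_square)
  qed
  have C1: "2 * t * IT \<le> (t * t' / \<xi>) * Th + \<xi> * d * NC"
  proof -
    define s where "s = t' / \<xi>"
    have s0: "s > 0" using t' xi by (simp add: s_def)
    have "0 \<le> (norm (s *\<^sub>R \<theta> - (q - p)))^2" by simp
    also have "\<dots> = s^2 * Th - 2 * s * IT + NC"
    proof -
      have "q - p = - (p - q)" by simp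
      thus ?thesis unfolding Th_def IT_def NC_def power2_norm_eq_inner
        by (simp add: inner_diff_left inner_diff_right inner_commute algebra_simps power2_eq_square)
    qed
    finally have "2 * s * IT \<le> s^2 * Th + NC" by simp
    hence "t * (2 * s * IT) \<le> t * (s^2 * Th + NC)" using t by (intro mult_left_mono) auto
    hence "(t / s) * (2 * s * IT) \<le> (t / s) * (s^2 * Th + NC)" using t s0
      by (simp add: field_simps)
    hence a: "(t / s) * (2 * s * IT) \<le> (t / s) * (s^2 * Th) + (t / s) * NC"
      by (simp add: distrib_left)
    have e1: "t / s = \<xi> * d" using xi t' unfolding s_def d by (simp add: field_simps)
    have e2: "(t / s) * (2 * s * IT) = 2 * t * IT" using s0 by (simp add: field_simps)
    have e3: "(t / s) * (s^2 * Th) = (t * t' / \<xi>) * Th" using s0 xi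
      unfolding s_def by (simp add: field_simps power2_eq_square)
    have e4: "(t / s) * NC = \<xi> * d * NC" using e1 by simp
    show ?thesis using a e2 e3 e4 by linarith
  qed
  define al where "al = 1 + 1 / \<psi> - d * \<psi>"
  define be where "be = d * \<psi>"
  have K: "(1 + 1 / \<psi>) * (al * NA + be * NB) \<ge> al * be * NC"
  proof -
    define A where "A = (p - Z) \<bullet> (p - Z)"
    define B where "B = (q - Z) \<bullet> (q - Z)"
    define C where "C = (p - Z) \<bullet> (q - Z)"
    have nc: "NC = A - 2 * C + B"
    proof -
      have "p - q = (p - Z) - (q - Z)" by simp
      thus ?thesis unfolding NC_def A_def B_def C_def power2_norm_eq_inner
        by (simp add: inner_diff_left inner_diff_right inner_commute algebra_simps)
    qed
    have "0 \<le> (norm (al *\<^sub>R (p - Z) + be *\<^sub>R (q - Z)))^2" by simp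
    also have "\<dots> = al^2 * A + 2 * al * be * C + be^2 * B"
      unfolding A_def B_def C_def power2_norm_eq_inner
      by (simp add: inner_add_left inner_add_right inner_commute algebra_simps power2_eq_square)
    finally have sq: "0 \<le> al^2 * A + 2 * al * be * C + be^2 * B" .
    have eq: "1 + 1 / \<psi> = al + be" unfolding al_def be_def by simp
    have "(1 + 1 / \<psi>) * (al * NA + be * NB) - al * be * NC = al^2 * A + 2 * al * be * C + be^2 * B"
      unfolding nc NA_def NB_def power2_norm_eq_inner A_def[symmetric] B_def[symmetric] eq
      by (simp add: algebra_simps power2_eq_square)
    with sq show ?thesis by simp
  qed
  define ka where "ka = al * be / (1 + 1 / \<psi>)"
  have opp: "1 + 1 / \<psi> > 0" using psi0 by (simp add: add_pos_pos)
  have K': "al * NA + be * NB \<ge> ka * NC"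
  proof -
    have "ka * NC = (al * be * NC) / (1 + 1 / \<psi>)" unfolding ka_def by simp
    also have "\<dots> \<le> al * NA + be * NB" using K opp by (simp add: divide_le_eq mult.commute)
    finally show ?thesis .
  qed
  have alNA: "al * NA = NA + NA / \<psi> - be * NA" unfolding al_def be_def by (simp add: algebra_simps)
  have s1: "d * \<psi> * (2 * IB) = be * NA - be * NB - be * NC"
    unfolding E2 be_def by (simp add: algebra_simps)
  have s2: "(1 / \<beta>) * (2 * IY) = (1 / \<beta>) * Y1 - (1 / \<beta>) * Y2 - (1 / \<beta>) * Y3"
    unfolding E3 by (simp add: algebra_simps add_divide_distrib diff_divide_distrib)
  have E4': "NP = \<psi> / (\<psi> - 1) * NZ2 - 1 / (\<psi> - 1) * NZ + NA / \<psi>"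
  proof -
    have nz: "(\<psi> - 1) * \<psi> \<noteq> 0" "\<psi> - 1 \<noteq> 0" "\<psi> \<noteq> 0" using psi by simp_all
    have h: "NP = (\<psi>^2 * NZ2 - \<psi> * NZ + (\<psi> - 1) * NA) / ((\<psi> - 1) * \<psi>)"
      using E4 nz(1) by (simp add: eq_divide_eq mult.commute)
    also have "\<dots> = \<psi>^2 * NZ2 / ((\<psi> - 1) * \<psi>) - \<psi> * NZ / ((\<psi> - 1) * \<psi>)
                     + (\<psi> - 1) * NA / ((\<psi> - 1) * \<psi>)"
      by (simp add: add_divide_distrib diff_divide_distrib)
    also have "\<psi>^2 * NZ2 / ((\<psi> - 1) * \<psi>) = \<psi> / (\<psi> - 1) * NZ2"
      using nz by (simp add: power2_eq_square)
    also have "\<psi> * NZ / ((\<psi> - 1) * \<psi>) = 1 / (\<psi> - 1) * NZ"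
      using nz by simp
    also have "(\<psi> - 1) * NA / ((\<psi> - 1) * \<psi>) = NA / \<psi>"
      using nz by simp
    finally show ?thesis .
  qed
  have cz: "\<psi> / (\<psi> - 1) * NZ = NZ + 1 / (\<psi> - 1) * NZ" using psi by (simp add: field_simps)
  have NC0: "NC \<ge> 0" unfolding NC_def by simp
  have fin: "ka * NC + be * NC - \<xi> * d * NC \<ge> \<omega> * d * NC"
  proof -
    have nz: "\<psi> \<noteq> 0" "1 + \<psi> \<noteq> 0" "\<psi> + \<psi> * \<psi> \<noteq> 0" "\<psi> * (1 + \<psi>) \<noteq> 0"
      using psi psi0 by (simp_all add: add_pos_pos) (smt (verit) mult_pos_pos)
    have a1: "al = (1 + \<psi> - d * \<psi>^2) / \<psi>"
      unfolding al_def using nz by (simp add: field_simps power2_eq_square)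
    have a2: "1 + 1 / \<psi> = (1 + \<psi>) / \<psi>" using nz by (simp add: field_simps)
    have "ka = ((1 + \<psi> - d * \<psi>^2) / \<psi>) * (d * \<psi>) / ((1 + \<psi>) / \<psi>)"
      unfolding ka_def a1 a2 be_def ..
    also have "\<dots> = d * \<psi> * (1 + \<psi> - d * \<psi>^2) / (1 + \<psi>)"
      using nz by (simp add: field_simps)
    finally have "ka = d * \<psi> * (1 + \<psi> - d * \<psi>^2) / (1 + \<psi>)" .
    hence "ka + be - \<xi> * d - \<omega> * d = d * \<psi>^3 * (\<phi> - d) / (1 + \<psi>)"
      unfolding om be_def using psi0 psi by (simp add: field_simps power2_eq_square power3_eq_cube)
    also have "\<dots> \<ge> 0" using dpos psi0 dphi by simp
    finally have "(ka + be - \<xi> * d - \<omega> * d) * NC \<ge> 0" using NC0 by simp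
    thus ?thesis by (simp add: algebra_simps)
  qed
  have k2: "2 * t * Jr \<le> 2 * IA + d * \<psi> * (2 * IB) + 2 * t * IT + (1 / \<beta>) * (2 * IY) + 2 * t * PY"
  proof -
    have k1: "t * Jr \<le> IA + d * \<psi> * IB + t * IT + (1 / \<beta>) * IY + t * PY"
      using KEY unfolding IA_def IB_def IT_def IY_def .
    show ?thesis using mult_left_mono[OF k1, of 2] by (simp add: algebra_simps)
  qed
  show ?thesis
    unfolding NA_def[symmetric] NB_def[symmetric] NC_def[symmetric] NZ_def[symmetric] NZ2_def[symmetric]
      NP_def[symmetric] Y1_def[symmetric] Y2_def[symmetric] Y3_def[symmetric] Th_def[symmetric]
    using k2 s1 s2 E1 E4' cz K' alNA fin C1 by linarith
qed


theorem lemma3p2: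
  fixes f :: "'b::euclidean_space \<Rightarrow> ereal"
    and g :: "'a::euclidean_space \<Rightarrow> ereal"
    and Phi :: "'a \<Rightarrow> 'b \<Rightarrow> real"
    and Gx :: "'a \<Rightarrow> 'b \<Rightarrow> 'a" and Gy :: "'a \<Rightarrow> 'b \<Rightarrow> 'b"
    and \<psi> \<xi> \<phi> \<omega> \<tau>max \<nu> \<mu> \<eta> \<beta> :: real and M :: nat
    and x z :: "nat \<Rightarrow> 'a" and y :: "nat \<Rightarrow> 'b" and \<tau> \<delta> :: "nat \<Rightarrow> real"
    and xs :: 'a and ys :: 'b
  assumes f_pcc: "proper_fun f" "closed_fun f" "convex_fun f"
    and g_pcc: "proper_fun g" "closed_fun g" "convex_fun g"
    \<comment> \<open>Phi continuous on dom g x dom f*, with partial gradients Gx, Gy\<close>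
    and Phi_cont: "continuous_on (edom g \<times> edom (fconj f)) (\<lambda>(u, v). Phi u v)"
    and Gx_deriv: "\<And>u v. u \<in> edom g \<Longrightarrow> v \<in> edom (fconj f) \<Longrightarrow>
                     ((\<lambda>u'. Phi u' v) has_derivative (\<lambda>h. Gx u v \<bullet> h)) (at u)"
    and Gy_deriv: "\<And>u v. u \<in> edom g \<Longrightarrow> v \<in> edom (fconj f) \<Longrightarrow>
                     ((\<lambda>v'. Phi u v') has_derivative (\<lambda>h. Gy u v \<bullet> h)) (at v)"
    \<comment> \<open>(A2)\<close>
    and Phi_cvx: "\<And>v. v \<in> edom (fconj f) \<Longrightarrow> convex_on (edom g) (\<lambda>u. Phi u v)"
    and Phi_ccv: "\<And>u. u \<in> edom g \<Longrightarrow> concave_on (edom (fconj f)) (\<lambda>v. Phi u v)"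
    and Lip: "\<And>X Y. bounded X \<Longrightarrow> bounded Y \<Longrightarrow>
               \<exists>Lyy Lxx Lxy. Lyy \<ge> 0 \<and> Lxx \<ge> 0 \<and> Lxy > 0 \<and>
                 (\<forall>u\<in>X \<inter> edom g. \<forall>u'\<in>X \<inter> edom g. \<forall>v\<in>Y \<inter> edom (fconj f). \<forall>v'\<in>Y \<inter> edom (fconj f).
                    norm (Gy u v - Gy u v') \<le> Lyy * norm (v - v') \<and>
                    norm (Gx u v - Gx u' v') \<le> Lxx * norm (u - u') + Lxy * norm (v - v'))"
    \<comment> \<open>(A1): Omega nonempty and the saddle point (xs, ys) in Omega\<close>
    and Omega: "xs \<in> edom g" "ys \<in> edom (fconj f)"
               "- Gx xs ys \<in> subdiff g xs" "Gy xs ys \<in> subdiff (fconj f) ys"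
    and L_fin: "\<bar>g xs + ereal (Phi xs ys) - fconj f ys\<bar> \<noteq> \<infinity>"
    \<comment> \<open>parameters of PDAc-L\<close>
    and par_psi: "1 < \<psi>" "\<psi> < 1 + sqrt 3"
    and par_xi: "\<xi> > 0" and par_phi: "\<phi> > 1"
    and omega_def: "\<omega> = 2 * \<psi> - \<xi> - \<psi>^3 * \<phi> / (1 + \<psi>)" and omega_pos: "\<omega> > 0"
    and par_tmax: "\<tau>max > 0"
    and par_nu: "0 < \<nu>" "\<nu> < 1" and par_mu: "0 < \<mu>" "\<mu> < 1"
    and par_eta: "0 \<le> \<eta>" "\<eta> < 1" and par_M: "M \<ge> 1" and par_beta: "\<beta> > 0"
    \<comment> \<open>initialisation\<close>
    and init: "x 0 \<in> edom g" "y 0 \<in> edom (fconj f)" "0 < \<tau> 0" "\<tau> 0 \<le> \<tau>max"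
              "z 0 = x 0" "\<delta> 0 = 1"
    \<comment> \<open>step (1)\<close>
    and step_z: "\<And>n. n \<ge> 1 \<Longrightarrow> z n = ((\<psi> - 1) / \<psi>) *\<^sub>R x (n - 1) + (1 / \<psi>) *\<^sub>R z (n - 1)"
    and step_x: "\<And>n. n \<ge> 1 \<Longrightarrow>
                   x n \<in> Prox_set g (\<tau> (n - 1)) (z n - \<tau> (n - 1) *\<^sub>R Gx (x (n - 1)) (y (n - 1)))"
    \<comment> \<open>step (2): backtracking linesearch with the smallest admissible i\<close>
    and step_y: "\<And>n. n \<ge> 1 \<Longrightarrow>
       (let tb = min (\<phi> * \<tau> (n - 1)) \<tau>max;
            Y = (\<lambda>t. Prox_set (fconj f) (\<beta> * t) (y (n - 1) + (\<beta> * t) *\<^sub>R Gy (x n) (y (n - 1))));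
            C = (\<lambda>t v. t * \<tau> (n - 1) / \<xi> * (norm (theta_n Gx x y n v))^2 + 2 * t * PhiY_n Phi Gy x y n v
                     \<le> \<nu> * r_n \<omega> \<beta> \<delta> x y n v + (1 - \<nu>) * c_n \<eta> M \<omega> \<beta> \<delta> x y n)
        in \<exists>i::nat. \<tau> n = tb * \<mu> ^ i \<and> y n \<in> Y (\<tau> n) \<and> C (\<tau> n) (y n) \<and>
                   (\<forall>j<i. \<forall>v \<in> Y (tb * \<mu> ^ j). \<not> C (tb * \<mu> ^ j) v))"
    \<comment> \<open>step (3)\<close>
    and step_delta: "\<And>n. n \<ge> 1 \<Longrightarrow> \<delta> n = \<tau> n / \<tau> (n - 1)"
  shows "\<forall>n\<ge>1.
    (let L = (\<lambda>u v. g u + ereal (Phi u v) - fconj f v);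
         J = (\<lambda>u v. L u ys - L xs v);
         a = (\<lambda>k. \<psi> / (\<psi> - 1) * (norm (z (k + 1) - xs))^2 + (1 / \<beta>) * (norm (y (k - 1) - ys))^2
                   + \<omega> * \<delta> (k - 1) * (norm (x k - x (k - 1)))^2);
         b = (\<lambda>k. - (\<tau> k * \<tau> (k - 1) / \<xi>) * (norm (theta_n Gx x y k (y k)))^2
                   + (1 / \<beta>) * (norm (y k - y (k - 1)))^2
                   + \<omega> * \<delta> (k - 1) * (norm (x k - x (k - 1)))^2 - 2 * \<tau> k * PhiY_n Phi Gy x y k (y k))
     in ereal (a (n + 1)) + ereal (2 * \<tau> n) * J (x n) (y n) \<le> ereal (a n - b n))"
  proof (intro allI impI)
  fix n :: nat assume n: "n \<ge> 1"
  have g_ninf: "\<And>u. g u \<noteq> -\<infinity>" using g_pcc(1) by (auto simp: proper_fun_def)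
  obtain vg where vg: "g vg < \<infinity>" using g_pcc(1) by (auto simp: proper_fun_def)
  have f_ninf: "\<And>v. fconj f v \<noteq> -\<infinity>" using fconj_ninf[OF f_pcc(1)] .
  have fys: "fconj f ys < \<infinity>" using Omega(2) by (simp add: edom_def)
  have gxs: "g xs < \<infinity>" using Omega(1) by (simp add: edom_def)
  have g_cvx: "\<And>a b t. g a < \<infinity> \<Longrightarrow> g b < \<infinity> \<Longrightarrow> 0 \<le> t \<Longrightarrow> t \<le> 1 \<Longrightarrow>
       g ((1 - t) *\<^sub>R a + t *\<^sub>R b) \<le> ereal ((1 - t) * real_of_ereal (g a) + t * real_of_ereal (g b))"
    using epi_cvx[OF g_pcc(3) g_ninf] by blast
  have f_cvx: "\<And>a b t. fconj f a < \<infinity> \<Longrightarrow> fconj f b < \<infinity> \<Longrightarrow> 0 \<le> t \<Longrightarrow> t \<le> 1 \<Longrightarrow>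
       fconj f ((1 - t) *\<^sub>R a + t *\<^sub>R b) \<le> ereal ((1 - t) * real_of_ereal (fconj f a) + t * real_of_ereal (fconj f b))"
    using fconj_cvx[OF f_pcc(1)] by blast
  have ystep: "y k \<in> Prox_set (fconj f) (\<beta> * \<tau> k) (y (k - 1) + (\<beta> * \<tau> k) *\<^sub>R Gy (x k) (y (k - 1)))
      \<and> (\<exists>i. \<tau> k = min (\<phi> * \<tau> (k - 1)) \<tau>max * \<mu> ^ i)" if k: "k \<ge> 1" for k
    using step_y[OF k] by (auto simp: Let_def)
  have tau_pos: "\<tau> k > 0" for k
  proof (induction k)
    case 0 thus ?case using init by simp
  next
    case (Suc k)
    obtain i where i: "\<tau> (Suc k) = min (\<phi> * \<tau> k) \<tau>max * \<mu> ^ i" using ystep[of "Suc k"] by auto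
    have "min (\<phi> * \<tau> k) \<tau>max > 0" using Suc par_phi par_tmax by simp
    thus ?case using i par_mu by simp
  qed
  have tau_le: "\<tau> k \<le> \<phi> * \<tau> (k - 1)" if k: "k \<ge> 1" for k
  proof -
    obtain i where i: "\<tau> k = min (\<phi> * \<tau> (k - 1)) \<tau>max * \<mu> ^ i" using ystep[OF k] by auto
    have m: "min (\<phi> * \<tau> (k - 1)) \<tau>max > 0" using tau_pos par_phi par_tmax by simp
    have "\<mu> ^ i \<le> 1" using par_mu by (simp add: power_le_one)
    hence "\<tau> k \<le> min (\<phi> * \<tau> (k - 1)) \<tau>max" unfolding i
      using m by (intro mult_left_le) auto
    thus ?thesis by simp
  qed
  have xdom: "g (x k) < \<infinity>" for k
  proof (cases "k = 0")
    case True thus ?thesis using init(1) by (simp add: edom_def)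
  next
    case False
    hence k: "k \<ge> 1" by simp
    show ?thesis using prox_vi(1)[OF step_x[OF k] tau_pos g_ninf vg g_cvx] by blast
  qed
  have ydom: "fconj f (y k) < \<infinity>" for k
  proof (cases "k = 0")
    case True thus ?thesis using init(2) by (simp add: edom_def)
  next
    case False
    hence k: "k \<ge> 1" by simp
    have lam: "\<beta> * \<tau> k > 0" using par_beta tau_pos by simp
    show ?thesis using prox_vi(1)[OF conjunct1[OF ystep[OF k]] lam f_ninf fys f_cvx] by blast
  qed
  define Gr where "Gr = (\<lambda>u. real_of_ereal (g u))"
  define Fr where "Fr = (\<lambda>v. real_of_ereal (fconj f v))"
  have eG: "g u = ereal (Gr u)" if "g u < \<infinity>" for u
    using that g_ninf[of u] unfolding Gr_def by (cases "g u") auto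
  have eF: "fconj f v = ereal (Fr v)" if "fconj f v < \<infinity>" for v
    using that f_ninf[of v] unfolding Fr_def by (cases "fconj f v") auto
  define t where "t = \<tau> n"
  define t' where "t' = \<tau> (n - 1)"
  define d where "d = \<delta> n"
  define p where "p = x (n + 1)"
  define q where "q = x n"
  define Z where "Z = z (n + 1)"
  define zn where "zn = z n"
  define yn where "yn = y n"
  define yn1 where "yn1 = y (n - 1)"
  define Gxn where "Gxn = Gx q yn"
  define Gxo where "Gxo = Gx (x (n - 1)) yn1"
  define Gyo where "Gyo = Gy q yn1"
  have t0: "t > 0" and t'0: "t' > 0" using tau_pos by (simp_all add: t_def t'_def)
  have dd: "d = t / t'" using step_delta[OF n] by (simp add: d_def t_def t'_def)
  have dphi: "d \<le> \<phi>" using tau_le[OF n] t'0 by (simp add: dd t_def t'_def divide_le_eq)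
  have d0: "d > 0" using t0 t'0 dd by simp
  have psi0: "\<psi> > 0" using par_psi by simp
  have Zdef: "Z = ((\<psi> - 1) / \<psi>) *\<^sub>R q + (1 / \<psi>) *\<^sub>R zn"
    using step_z[of "n + 1"] by (simp add: Z_def q_def zn_def)
  have qzn: "q - zn = \<psi> *\<^sub>R (q - Z)"
  proof -
    have "\<psi> *\<^sub>R Z = (\<psi> - 1) *\<^sub>R q + zn" using psi0 unfolding Zdef by (simp add: scaleR_add_right)
    thus ?thesis by (simp add: scaleR_diff_right algebra_simps)
  qed
  have qdom: "q \<in> edom g" "xs \<in> edom g" "yn \<in> edom (fconj f)" "yn1 \<in> edom (fconj f)" "ys \<in> edom (fconj f)"
    using xdom ydom Omega by (auto simp: edom_def q_def yn_def yn1_def)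
  have F1: "t * Gr p - t * Gr xs \<le> (p - Z) \<bullet> (xs - p) + t * (Gxn \<bullet> (xs - p))"
  proof -
    have sx: "p \<in> Prox_set g t (Z - t *\<^sub>R Gxn)"
      using step_x[of "n + 1"] by (simp add: p_def t_def Z_def Gxn_def q_def yn_def)
    have "Gr p - Gr xs \<le> ((p - (Z - t *\<^sub>R Gxn)) \<bullet> (xs - p)) / t"
      using prox_vi(2)[OF sx t0 g_ninf vg g_cvx gxs] by (simp add: Gr_def)
    hence "t * (Gr p - Gr xs) \<le> (p - (Z - t *\<^sub>R Gxn)) \<bullet> (xs - p)"
      using t0 by (simp add: le_divide_eq mult.commute)
    thus ?thesis by (simp add: inner_diff_left inner_add_left algebra_simps)
  qed
  have F2: "t * Gr q - t * Gr p \<le> d * \<psi> * ((q - Z) \<bullet> (p - q)) + t * (Gxo \<bullet> (p - q))"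
  proof -
    have sx: "q \<in> Prox_set g t' (zn - t' *\<^sub>R Gxo)"
      using step_x[OF n] by (simp add: q_def t'_def zn_def Gxo_def yn1_def)
    have "Gr q - Gr p \<le> ((q - (zn - t' *\<^sub>R Gxo)) \<bullet> (p - q)) / t'"
      using prox_vi(2)[OF sx t'0 g_ninf vg g_cvx xdom[of "n + 1"]] by (simp add: Gr_def p_def)
    hence "t' * (Gr q - Gr p) \<le> (q - (zn - t' *\<^sub>R Gxo)) \<bullet> (p - q)"
      using t'0 by (simp add: le_divide_eq mult.commute)
    also have "\<dots> = \<psi> * ((q - Z) \<bullet> (p - q)) + t' * (Gxo \<bullet> (p - q))"
    proof -
      have e0: "q - (zn - t' *\<^sub>R Gxo) = (q - zn) + t' *\<^sub>R Gxo" by simp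
      show ?thesis unfolding e0 qzn by (simp add: inner_add_left)
    qed
    finally have "d * (t' * (Gr q - Gr p)) \<le> d * (\<psi> * ((q - Z) \<bullet> (p - q)) + t' * (Gxo \<bullet> (p - q)))"
      using d0 by (intro mult_left_mono) auto
    moreover have dt: "d * t' = t" using dd t'0 by simp
    moreover have "d * (t' * (Gr q - Gr p)) = t * Gr q - t * Gr p"
      by (simp add: mult.assoc[symmetric] dt right_diff_distrib)
    moreover have "d * (\<psi> * ((q - Z) \<bullet> (p - q)) + t' * (Gxo \<bullet> (p - q)))
        = d * \<psi> * ((q - Z) \<bullet> (p - q)) + t * (Gxo \<bullet> (p - q))"
      by (simp add: distrib_left mult.assoc[symmetric] dt)
    ultimately show ?thesis by linarith
  qed
  have F3: "t * Fr yn - t * Fr ys \<le> (1 / \<beta>) * ((yn - yn1) \<bullet> (ys - yn)) - t * (Gyo \<bullet> (ys - yn))"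
  proof -
    have lam: "\<beta> * t > 0" using par_beta t0 by simp
    have sy: "yn \<in> Prox_set (fconj f) (\<beta> * t) (yn1 + (\<beta> * t) *\<^sub>R Gyo)"
      using conjunct1[OF ystep[OF n]] by (simp add: yn_def t_def yn1_def Gyo_def q_def)
    have "Fr yn - Fr ys \<le> ((yn - (yn1 + (\<beta> * t) *\<^sub>R Gyo)) \<bullet> (ys - yn)) / (\<beta> * t)"
      using prox_vi(2)[OF sy lam f_ninf fys f_cvx fys] by (simp add: Fr_def)
    hence "t * (Fr yn - Fr ys) \<le> t * (((yn - (yn1 + (\<beta> * t) *\<^sub>R Gyo)) \<bullet> (ys - yn)) / (\<beta> * t))"
      using t0 by (intro mult_left_mono) auto
    also have "\<dots> = (1 / \<beta>) * ((yn - yn1) \<bullet> (ys - yn)) - t * (Gyo \<bullet> (ys - yn))"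
      using t0 par_beta by (simp add: inner_diff_left inner_add_left field_simps)
    finally show ?thesis by (simp add: algebra_simps)
  qed
  have F4: "Phi q yn + Gxn \<bullet> (xs - q) \<le> Phi xs yn"
    unfolding Gxn_def
    by (rule grad_ineq[OF Phi_cvx[OF qdom(3)] qdom(1) qdom(2) Gx_deriv[OF qdom(1) qdom(3)]])
  have F5: "- Phi q yn1 + (- Gyo) \<bullet> (ys - yn1) \<le> - Phi q ys"
  proof -
    have cv: "convex_on (edom (fconj f)) (\<lambda>v. - Phi q v)"
      using Phi_ccv[OF qdom(1)] by (simp add: concave_on_def)
    have "((\<lambda>v. - Phi q v) has_derivative (\<lambda>h. - (Gyo \<bullet> h))) (at yn1)"
      unfolding Gyo_def by (rule has_derivative_minus[OF Gy_deriv[OF qdom(1) qdom(4)]])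
    hence D: "((\<lambda>v. - Phi q v) has_derivative (\<lambda>h. (- Gyo) \<bullet> h)) (at yn1)" by simp
    show ?thesis using grad_ineq[OF cv qdom(4) qdom(5) D] by simp
  qed
  define Jr where "Jr = Gr q + Phi q ys - Fr ys - (Gr xs + Phi xs yn - Fr yn)"
  define \<theta> where "\<theta> = Gxn - Gxo"
  define PY where "PY = Phi q yn1 + Gyo \<bullet> (yn - yn1) - Phi q yn"
  have KEY: "t * Jr \<le> (p - Z) \<bullet> (xs - p) + d * \<psi> * ((q - Z) \<bullet> (p - q)) + t * (\<theta> \<bullet> (q - p))
               + (1 / \<beta>) * ((yn - yn1) \<bullet> (ys - yn)) + t * PY"
  proof -
    have eJ: "t * Jr = t * Gr q + t * Phi q ys - t * Fr ys - t * Gr xs - t * Phi xs yn + t * Fr yn"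
      unfolding Jr_def by (simp add: algebra_simps)
    have ePY: "t * PY = t * Phi q yn1 + t * (Gyo \<bullet> (yn - yn1)) - t * Phi q yn"
      unfolding PY_def by (simp add: algebra_simps)
    have tF4: "t * Phi q yn + t * (Gxn \<bullet> (xs - q)) \<le> t * Phi xs yn"
      using mult_left_mono[OF F4, of t] t0 by (simp add: algebra_simps)
    have tF5: "t * Phi q ys \<le> t * Phi q yn1 + t * (Gyo \<bullet> (ys - yn1))"
      using mult_left_mono[OF F5, of t] t0 by (simp add: algebra_simps)
    have iy: "t * (Gyo \<bullet> (ys - yn1)) = t * (Gyo \<bullet> (ys - yn)) + t * (Gyo \<bullet> (yn - yn1))"
      by (simp add: inner_diff_right algebra_simps)
    have ix: "t * (Gxn \<bullet> (xs - p)) + t * (Gxo \<bullet> (p - q)) = t * (Gxn \<bullet> (xs - q)) + t * (\<theta> \<bullet> (q - p))"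
      unfolding \<theta>_def by (simp add: inner_diff_right inner_diff_left algebra_simps)
    show ?thesis using eJ ePY tF4 tF5 iy ix F1 F2 F3 by linarith
  qed
  have Z2: "z (n + 1 + 1) = ((\<psi> - 1) / \<psi>) *\<^sub>R p + (1 / \<psi>) *\<^sub>R Z"
    using step_z[of "n + 1 + 1"] by (simp add: p_def Z_def)
  have R: "\<psi> / (\<psi> - 1) * (norm (z (n + 1 + 1) - xs))^2 + (1 / \<beta>) * (norm (yn - ys))^2 + \<omega> * d * (norm (p - q))^2
         + 2 * t * Jr
      \<le> \<psi> / (\<psi> - 1) * (norm (Z - xs))^2 + (1 / \<beta>) * (norm (yn1 - ys))^2 + \<omega> * \<delta> (n - 1) * (norm (q - x (n - 1)))^2
         - (- (t * t' / \<xi>) * (norm \<theta>)^2 + (1 / \<beta>) * (norm (yn - yn1))^2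
            + \<omega> * \<delta> (n - 1) * (norm (q - x (n - 1)))^2 - 2 * t * PY)"
    by (rule final_alg[OF par_psi(1) par_xi par_beta omega_def t0 t'0 dd dphi Z2 KEY])
  have eJr: "(g q + ereal (Phi q ys) - fconj f ys) - (g xs + ereal (Phi xs yn) - fconj f yn) = ereal Jr"
    using eG[OF xdom[of n]] eG[OF gxs] eF[OF fys] eF[OF ydom[of n]]
    by (simp add: Jr_def q_def yn_def)
  have nn: "n + 1 - 1 = n" by simp
  show "(let L = (\<lambda>u v. g u + ereal (Phi u v) - fconj f v);
         J = (\<lambda>u v. L u ys - L xs v);
         a = (\<lambda>k. \<psi> / (\<psi> - 1) * (norm (z (k + 1) - xs))^2 + (1 / \<beta>) * (norm (y (k - 1) - ys))^2
                   + \<omega> * \<delta> (k - 1) * (norm (x k - x (k - 1)))^2);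
         b = (\<lambda>k. - (\<tau> k * \<tau> (k - 1) / \<xi>) * (norm (theta_n Gx x y k (y k)))^2
                   + (1 / \<beta>) * (norm (y k - y (k - 1)))^2
                   + \<omega> * \<delta> (k - 1) * (norm (x k - x (k - 1)))^2 - 2 * \<tau> k * PhiY_n Phi Gy x y k (y k))
     in ereal (a (n + 1)) + ereal (2 * \<tau> n) * J (x n) (y n) \<le> ereal (a n - b n))"
    unfolding Let_def theta_n_def PhiY_n_def nn
    using R eJr
    by (simp add: t_def t'_def d_def p_def q_def Z_def yn_def yn1_def \<theta>_def PY_def Gxn_def Gxo_def Gyo_def)
qed

end
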